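(* Let $n\ge1$ and $k_1,\dots,k_n\in\mathbb N$, and write $W_a=\chi_{k_1}\circ\cdots\circ\chi_{k_n}(a)$ for $a\in\{1,2,3\}$. Then: (i) $W_3$ is a prefix of $W_2$; (ii) if $k_n\ge2$, then the word obtained from $W_1$ by deleting its last letter is a prefix of $W_3$, and the last letter of $W_1$ is $1$ if $n$ is even and $2$ if $n$ is odd; (iii) if $k_n=1$ and $n\ge2$, then $W_3$ is a prefix of $W_1$.
   Context: For $k\in\mathbb N$, $\chi_k$ is the substitution on the alphabet $\{1,2,3\}$ given by $1\mapsto2$, $2\mapsto31^k$, $3\mapsto31^{k-1}$, extended to words by concatenation. *)

theory Defs
  imports Main "HOL-Library.Sublist"
begin

fun chi_letter :: "nat \<Rightarrow> nat \<Rightarrow> nat list" where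
  "chi_letter k a =
     (if a = 1 then [2]
      else if a = 2 then 3 # replicate k 1
      else if a = 3 then 3 # replicate (k - 1) 1
      else [a])"

definition chi :: "nat \<Rightarrow> nat list \<Rightarrow> nat list" where
  "chi k w = concat (map (chi_letter k) w)"

text \<open>W ks a = chi_{k1} (chi_{k2} ( ... (chi_{kn} [a]))) for ks = [k1,...,kn].\<close>
definition W :: "nat list \<Rightarrow> nat \<Rightarrow> nat list" where
  "W ks a = foldr chi ks [a]"

end

theory Submission
  imports Defs
begin

definition Wl :: "nat list \<Rightarrow> nat list \<Rightarrow> nat list" where
  "Wl q w = foldr chi q w"

lemma chi_append[simp]: "chi k (u @ v) = chi k u @ chi k v"
  by (simp add: chi_def)

lemma chi_Nil[simp]: "chi k [] = []"
  by (simp add: chi_def)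

lemma chi_nonempty: "w \<noteq> [] \<Longrightarrow> chi k w \<noteq> []"
  by (cases w) (auto simp: chi_def)

lemma Wl_append[simp]: "Wl q (u @ v) = Wl q u @ Wl q v"
  by (induction q) (auto simp: Wl_def)

lemma Wl_Nil[simp]: "Wl q [] = []"
  by (induction q) (auto simp: Wl_def)

lemma Wl_nonempty: "w \<noteq> [] \<Longrightarrow> Wl q w \<noteq> []"
  by (induction q) (auto simp: Wl_def chi_nonempty)

lemma Wl_snoc: "Wl (q @ [k]) w = Wl q (chi k w)"
  by (simp add: Wl_def)

lemma W_Wl: "W q a = Wl q [a]"
  by (simp add: W_def Wl_def)

lemma W_ne: "W q a \<noteq> []"
  by (simp add: W_Wl Wl_nonempty)

lemma chi1: "chi k [1] = [2]" by (simp add: chi_def)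
lemma chi1': "chi k [Suc 0] = [2]" by (simp add: chi_def)
lemma chi2: "chi k [2] = 3 # replicate k 1" by (simp add: chi_def)
lemma chi3: "chi k [3] = 3 # replicate (k - 1) 1" by (simp add: chi_def)

lemma W_snoc1: "W (q @ [k]) 1 = W q 2"
  by (simp add: W_Wl Wl_snoc chi1')

lemma Wl_Cons: "Wl q (a # w) = W q a @ Wl q w"
  using Wl_append[of q "[a]" w] by (simp add: W_Wl)

lemma Wl_rep: "Wl q (replicate n a) = concat (replicate n (W q a))"
  by (induction n) (auto simp: Wl_Cons)

lemma W_snoc2: "W (q @ [k]) 2 = W q 3 @ concat (replicate k (W q 1))"
proof -
  have "W (q @ [k]) 2 = Wl q (chi k [2])" by (simp only: W_Wl Wl_snoc)
  also have "... = Wl q (3 # replicate k 1)" by (simp only: chi2)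
  also have "... = W q 3 @ Wl q (replicate k 1)" by (rule Wl_Cons)
  also have "... = W q 3 @ concat (replicate k (W q 1))" by (simp only: Wl_rep)
  finally show ?thesis .
qed

lemma W_snoc3: "W (q @ [k]) 3 = W q 3 @ concat (replicate (k - 1) (W q 1))"
proof -
  have "W (q @ [k]) 3 = Wl q (chi k [3])" by (simp only: W_Wl Wl_snoc)
  also have "... = Wl q (3 # replicate (k - 1) 1)" by (simp only: chi3)
  also have "... = W q 3 @ Wl q (replicate (k - 1) 1)" by (rule Wl_Cons)
  also have "... = W q 3 @ concat (replicate (k - 1) (W q 1))" by (simp only: Wl_rep)
  finally show ?thesis .
qed

lemma main_H: "\<forall>k\<in>set q. k \<ge> 1 \<Longrightarrow> prefix (butlast (W q 1)) (W q 2)"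
proof (induction "length q" arbitrary: q rule: less_induct)
  case less
  show ?case
  proof (cases q rule: rev_cases)
    case Nil
    then show ?thesis by (simp add: W_def)
  next
    case (snoc q' k)
    have A: "prefix (butlast (W q' 2)) (W q' 3 @ W q' 1)"
    proof (cases q' rule: rev_cases)
      case Nil
      then show ?thesis by (simp add: W_def)
    next
      case (snoc P k')
      have IH: "prefix (butlast (W P 1)) (W P 2)"
        using less snoc \<open>q = q' @ [k]\<close> by simp
      have "W q' 2 = W q' 3 @ W P 1"
      proof -
        have "W q' 2 = W P 3 @ concat (replicate k' (W P 1))"
          using snoc W_snoc2 by simp
        moreover have "W q' 3 = W P 3 @ concat (replicate (k' - 1) (W P 1))"
          using snoc W_snoc3 by simp
        moreover have "k' \<ge> 1" using less.prems snoc \<open>q = q' @ [k]\<close> by simp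
        ultimately show ?thesis
          by (cases k') (simp_all add: replicate_append_same[symmetric] del: replicate_append_same)
      qed
      hence "butlast (W q' 2) = W q' 3 @ butlast (W P 1)"
        using W_ne by (simp add: butlast_append)
      moreover have "W q' 1 = W P 2" using snoc W_snoc1 by simp
      ultimately show ?thesis using IH by simp
    qed
    have "W q 2 = W q' 3 @ concat (replicate k (W q' 1))"
      using snoc W_snoc2 by simp
    show ?thesis
    proof (cases k)
      case 0
      then show ?thesis using less.prems snoc by simp
    next
      case (Suc j)
      have "prefix (W q' 3 @ W q' 1) (W q 2)"
        using \<open>W q 2 = _\<close> Suc by simp
      then show ?thesis using A snoc W_snoc1 prefix_order.trans by metis
    qed
  qed
qed

lemma main_A:
  assumes "\<forall>k\<in>set q'. k \<ge> 1"
  shows "prefix (butlast (W q' 2)) (W q' 3 @ W q' 1)"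
proof (cases q' rule: rev_cases)
  case Nil
  then show ?thesis by (simp add: W_def)
next
  case (snoc P k')
  have IH: "prefix (butlast (W P 1)) (W P 2)"
    using main_H assms snoc by simp
  have "W q' 2 = W q' 3 @ W P 1"
  proof -
    have "W q' 2 = W P 3 @ concat (replicate k' (W P 1))"
      using snoc W_snoc2 by simp
    moreover have "W q' 3 = W P 3 @ concat (replicate (k' - 1) (W P 1))"
      using snoc W_snoc3 by simp
    moreover have "k' \<ge> 1" using assms snoc by simp
    ultimately show ?thesis
      by (cases k') (simp_all add: replicate_append_same[symmetric] del: replicate_append_same)
  qed
  hence "butlast (W q' 2) = W q' 3 @ butlast (W P 1)"
    using W_ne by (simp add: butlast_append)
  moreover have "W q' 1 = W P 2" using snoc W_snoc1 by simp
  ultimately show ?thesis using IH by simp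
qed

lemma main_i:
  assumes "q \<noteq> []" "\<forall>k\<in>set q. k \<ge> 1"
  shows "prefix (W q 3) (W q 2)"
proof -
  obtain P k where q: "q = P @ [k]" using assms(1) by (cases q rule: rev_cases) auto
  have k: "k \<ge> 1" using assms q by simp
  have "concat (replicate k (W P 1)) = concat (replicate (k - 1) (W P 1)) @ W P 1"
    using k by (cases k) (simp_all add: replicate_append_same[symmetric] del: replicate_append_same)
  then show ?thesis using q W_snoc2 W_snoc3 by simp
qed

lemma last_chi: "w \<noteq> [] \<Longrightarrow> last (chi k w) = last (chi_letter k (last w))"
proof (induction w rule: rev_induct)
  case (snoc x xs)
  have "chi_letter k x \<noteq> []" by simp
  then show ?case by (simp add: chi_def)
qed simp

lemma last_W:
  assumes "\<forall>k\<in>set q. k \<ge> 1"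
  shows "last (W q 2) = (if even (length q) then 2 else 1) \<and> last (W q 1) = (if even (length q) then 1 else 2)"
  using assms
proof (induction q)
  case Nil
  then show ?case by (simp add: W_def)
next
  case (Cons k p)
  have e: "W (k # p) a = chi k (W p a)" for a by (simp add: W_def)
  have k: "k \<ge> 1" using Cons.prems by simp
  have IH: "last (W p 2) = (if even (length p) then 2 else 1) \<and> last (W p 1) = (if even (length p) then 1 else 2)"
    using Cons by simp
  show ?case using IH k W_ne[of p] by (simp add: e last_chi)
qed

theorem lemma3p13:
  fixes ks :: "nat list"
  assumes "length ks \<ge> 1"
    and "\<forall>k \<in> set ks. k \<ge> 1"
  shows "prefix (W ks 3) (W ks 2)
     \<and> (last ks \<ge> 2 \<longrightarrow>
          prefix (butlast (W ks 1)) (W ks 3)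
          \<and> last (W ks 1) = (if even (length ks) then 1 else 2))
     \<and> (last ks = 1 \<and> length ks \<ge> 2 \<longrightarrow> prefix (W ks 3) (W ks 1))"
proof (intro conjI impI)
  have ne: "ks \<noteq> []" using assms(1) by auto
  show "prefix (W ks 3) (W ks 2)" using main_i ne assms(2) by blast
  obtain pre m where ks: "ks = pre @ [m]" using ne by (cases ks rule: rev_cases) auto
  have pre: "\<forall>k\<in>set pre. k \<ge> 1" using assms(2) ks by simp
  {
    assume "2 \<le> last ks"
    hence m: "m \<ge> 2" using ks by simp
    have "concat (replicate (m - 1) (W pre 1)) = W pre 1 @ concat (replicate (m - 2) (W pre 1))"
    proof -
      obtain j where "m = Suc (Suc j)" using m by (metis add_2_eq_Suc le_Suc_ex)
      then show ?thesis by simp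
    qed
    hence "W ks 3 = (W pre 3 @ W pre 1) @ concat (replicate (m - 2) (W pre 1))"
      using ks W_snoc3 by simp
    moreover have "W ks 1 = W pre 2" using ks W_snoc1 by simp
    ultimately show "prefix (butlast (W ks 1)) (W ks 3)"
      using main_A[OF pre] prefix_order.trans by (metis prefix_append)
    show "last (W ks 1) = (if even (length ks) then 1 else 2)"
      using last_W[OF pre] \<open>W ks 1 = W pre 2\<close> ks by simp
  }
  {
    assume a: "last ks = 1 \<and> 2 \<le> length ks"
    then obtain P k' where P: "pre = P @ [k']" using ks by (cases pre rule: rev_cases) auto
    have m: "m = 1" using a ks by simp
    have "W ks 3 = W pre 3" using ks m W_snoc3[of pre m] by simp
    moreover have "W ks 1 = W pre 2" using ks W_snoc1 by simp
    ultimately show "prefix (W ks 3) (W ks 1)" using main_i[OF _ pre] P by simp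
  }
qed

end
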